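(* Consider $\dot{x} = f(x) + g(x)u$, $x\in\mathcal{X}\subseteq\mathbb{R}^n$, $u\in\mathcal{U}\subseteq\mathbb{R}^m$, with $f,g$ continuously differentiable and $\mathcal{U}$ a convex polytope; let $h$ be continuously differentiable, $\mathcal{C}_S=\{x:h(x)\ge0\}$, and let $k_b$ be a backup controller with backup set $\mathcal{C}_B=\{x:h_b(x)\ge0\}\subseteq\mathcal{C}_S$ (see context). Let $k_e(x,\theta)$, $\theta\in\mathbb{R}^p$, be a parameterized expanding controller with values in $\mathcal{U}$, and let $\eta:\mathcal{X}\to[0,1]$ be continuously differentiable with $\eta(x)=1$ for all $x\in\mathcal{C}_B$. Consider the augmented state $\hat x = (x,\theta)\in\hat{\mathcal{X}} = \mathcal{X}\times\mathbb{R}^p$ and augmented dynamics $$\dot{\hat x} = \hat f(\hat x)+\hat g(\hat x)\hat u,\quad \hat f(\hat x) = \begin{bmatrix} f(x)\\ 0_{p\times1}\end{bmatrix},\ \hat g(\hat x) = \begin{bmatrix} g(x) & 0_{n\times p}\\ 0_{p\times m} & I_p\end{bmatrix},$$ with $\hat u = (u,u_\theta)\in\hat{\mathcal{U}}=\mathcal{U}\times\mathbb{R}^p$. Define $\hat k_s(\hat x) = \big((1-\eta(x))k_e(x,\theta)+\eta(x)k_b(x),\ 0_{p\times1}\big)$ and $\hat{\mathcal{C}}_B = \{\hat x\in\hat{\mathcal{X}}: h_b(x)\ge 0\}$. Then $\hat k_s$ renders $\hat{\mathcal{C}}_B$ forward invariant along the augmented system $\dot{\hat x} = \hat f(\hat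 x)+\hat g(\hat x)\hat k_s(\hat x)$.
   Context: A set is forward invariant along a closed-loop system if solutions starting in it remain in it for all $t\ge0$. A backup controller is a continuously differentiable $k_b:\mathcal{X}\to\mathcal{U}$ rendering $\mathcal{C}_B=\{x\in\mathcal{X}: h_b(x)\ge0\}\subseteq\mathcal{C}_S$ forward invariant for $\dot x=f(x)+g(x)k_b(x)$, where $h_b$ is continuously differentiable with $\nabla h_b(x)\neq0$ on $\partial\mathcal{C}_B$. *)

theory Defs
  imports "HOL-Analysis.Analysis"
begin

definition C1_on :: "'a::real_normed_vector set \<Rightarrow> ('a \<Rightarrow> 'b::real_normed_vector) \<Rightarrow> bool" where
  "C1_on S f \<longleftrightarrow> (\<exists>f'. (\<forall>x\<in>S. (f has_derivative blinfun_apply (f' x)) (at x)) \<and> continuous_on S f')"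

text \<open>Since T \<ge> 0 is arbitrary, this covers all t \<ge> 0 for which a solution exists.\<close>
definition forward_invariant :: "'a::real_normed_vector set \<Rightarrow> ('a \<Rightarrow> 'a) \<Rightarrow> 'a set \<Rightarrow> bool" where
  "forward_invariant D F S \<longleftrightarrow>
     (\<forall>\<phi> T. 0 \<le> T \<and> \<phi> 0 \<in> S \<and>
        (\<forall>t\<in>{0..T}. \<phi> t \<in> D \<and> (\<phi> has_vector_derivative F (\<phi> t)) (at t within {0..T}))
        \<longrightarrow> (\<forall>t\<in>{0..T}. \<phi> t \<in> S))"

end

theory Submission
  imports Defs
begin

definition locLip :: "'a::real_normed_vector set \<Rightarrow> ('a \<Rightarrow> 'b::real_normed_vector) \<Rightarrow> bool" where
  "locLip S F \<longleftrightarrow> (\<forall>p\<in>S. \<exists>r>0. \<exists>L>0. cball p r \<subseteq> S \<and>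
     (\<forall>x\<in>cball p r. \<forall>y\<in>cball p r. norm (F x - F y) \<le> L * norm (x - y)))"

lemma C1_locLip:
  fixes F :: "'a::euclidean_space \<Rightarrow> 'b::real_normed_vector"
  assumes S: "open S" and C: "C1_on S F"
  shows "locLip S F"
  unfolding locLip_def
proof
  fix p assume p: "p \<in> S"
  obtain F' where d: "\<forall>x\<in>S. (F has_derivative blinfun_apply (F' x)) (at x)" and c: "continuous_on S F'"
    using C unfolding C1_on_def by blast
  obtain r where r: "r > 0" "cball p r \<subseteq> S" using S p open_contains_cball by blast
  have "compact ((\<lambda>x. norm (F' x)) ` cball p r)"
    by (intro compact_continuous_image continuous_on_norm continuous_on_subset[OF c r(2)]) auto
  then have "bounded ((\<lambda>x. norm (F' x)) ` cball p r)" by (rule compact_imp_bounded)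
  then obtain B where B0: "\<forall>v\<in>(\<lambda>x. norm (F' x)) ` cball p r. norm v \<le> B"
    unfolding bounded_iff by blast
  have B: "\<forall>x\<in>cball p r. norm (F' x) \<le> B"
  proof
    fix x assume "x \<in> cball p r"
    then have "norm (norm (F' x)) \<le> B" using B0 by blast
    then show "norm (F' x) \<le> B" by simp
  qed
  define L where "L = max B 1"
  have "\<forall>x\<in>cball p r. \<forall>y\<in>cball p r. norm (F x - F y) \<le> L * norm (x - y)"
  proof (intro ballI)
    fix x y assume xy: "x \<in> cball p r" "y \<in> cball p r"
    show "norm (F x - F y) \<le> L * norm (x - y)"
    proof (rule differentiable_bound[OF convex_cball _ _ xy])
      fix z assume z: "z \<in> cball p r"
      show "(F has_derivative blinfun_apply (F' z)) (at z within cball p r)"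
        using d z r(2) has_derivative_at_withinI by blast
      have "norm (F' z) \<le> B" using B z by blast
      then show "onorm (blinfun_apply (F' z)) \<le> L"
        unfolding L_def by (simp add: norm_blinfun.rep_eq[symmetric])
    qed
  qed
  then show "\<exists>r>0. \<exists>L>0. cball p r \<subseteq> S \<and> (\<forall>x\<in>cball p r. \<forall>y\<in>cball p r. norm (F x - F y) \<le> L * norm (x - y))"
    using r unfolding L_def by (intro exI[of _ r] conjI exI[of _ "max B 1"]) auto
qed

lemma locLip_bounded:
  assumes "\<forall>x\<in>cball p r. \<forall>y\<in>cball p r. norm (F x - F y) \<le> L * norm (x - y)" "r \<ge> 0" "L \<ge> 0"
  shows "\<forall>x\<in>cball p r. norm (F x) \<le> norm (F p) + L * r"
proof
  fix x assume x: "x \<in> cball p r"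
  have "p \<in> cball p r" using assms by simp
  then have "norm (F x - F p) \<le> L * norm (x - p)" using assms x by blast
  also have "\<dots> \<le> L * r" using x assms by (intro mult_left_mono) (auto simp: dist_norm norm_minus_commute)
  finally show "norm (F x) \<le> norm (F p) + L * r" by (smt (verit) norm_triangle_ineq2)
qed

lemma locLip_bilinear:
  assumes b: "bounded_bilinear b" and F: "locLip S F" and G: "locLip S G"
  shows "locLip S (\<lambda>x. b (F x) (G x))"
  unfolding locLip_def
proof
  fix p assume p: "p \<in> S"
  obtain r1 L1 where 1: "r1 > 0" "L1 > 0" "cball p r1 \<subseteq> S"
    "\<forall>x\<in>cball p r1. \<forall>y\<in>cball p r1. norm (F x - F y) \<le> L1 * norm (x - y)"
    using F p unfolding locLip_def by blast
  obtain r2 L2 where 2: "r2 > 0" "L2 > 0" "cball p r2 \<subseteq> S"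
    "\<forall>x\<in>cball p r2. \<forall>y\<in>cball p r2. norm (G x - G y) \<le> L2 * norm (x - y)"
    using G p unfolding locLip_def by blast
  obtain K where K: "K > 0" "\<And>a c. norm (b a c) \<le> norm a * norm c * K"
    using bounded_bilinear.pos_bounded[OF b] by blast
  define r where "r = min r1 r2"
  have r: "r > 0" "cball p r \<subseteq> cball p r1" "cball p r \<subseteq> cball p r2" using 1 2 by (auto simp: r_def)
  define MF where "MF = norm (F p) + L1 * r1"
  define MG where "MG = norm (G p) + L2 * r2"
  have MF: "\<forall>x\<in>cball p r. norm (F x) \<le> MF" using locLip_bounded[OF 1(4)] 1 r unfolding MF_def by auto
  have MG: "\<forall>x\<in>cball p r. norm (G x) \<le> MG" using locLip_bounded[OF 2(4)] 2 r unfolding MG_def by auto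
  have MF0: "MF \<ge> 0" "MG \<ge> 0" using 1 2 unfolding MF_def MG_def by auto
  define L where "L = K * (L1 * MG + MF * L2) + 1"
  have "\<forall>x\<in>cball p r. \<forall>y\<in>cball p r. norm (b (F x) (G x) - b (F y) (G y)) \<le> L * norm (x - y)"
  proof (intro ballI)
    fix x y assume x: "x \<in> cball p r" and y: "y \<in> cball p r"
    have eq: "b (F x) (G x) - b (F y) (G y) = b (F x - F y) (G x) + b (F y) (G x - G y)"
      by (simp add: bounded_bilinear.diff_left[OF b] bounded_bilinear.diff_right[OF b])
    have a1: "norm (b (F x - F y) (G x)) \<le> (L1 * norm (x - y)) * MG * K"
      using K(2)[of "F x - F y" "G x"] 1(4) r x y MG K(1) MF0
      by (smt (verit, ccfv_SIG) mult_mono mult_right_mono norm_ge_zero subsetD zero_le_mult_iff)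
    have a2: "norm (b (F y) (G x - G y)) \<le> MF * (L2 * norm (x - y)) * K"
      using K(2)[of "F y" "G x - G y"] 2(4) r x y MF K(1) MF0
      by (smt (verit, ccfv_SIG) mult_mono mult_right_mono norm_ge_zero subsetD zero_le_mult_iff)
    have "norm (b (F x) (G x) - b (F y) (G y)) \<le> (L1 * norm (x - y)) * MG * K + MF * (L2 * norm (x - y)) * K"
      unfolding eq by (rule norm_triangle_le) (use a1 a2 in linarith)
    also have "\<dots> \<le> L * norm (x - y)" unfolding L_def by (simp add: algebra_simps)
    finally show "norm (b (F x) (G x) - b (F y) (G y)) \<le> L * norm (x - y)" .
  qed
  moreover have "K * (L1 * MG + MF * L2) \<ge> 0" using K 1 2 MF0 by simp
  then have "L > 0" unfolding L_def by simp
  ultimately show "\<exists>r>0. \<exists>L>0. cball p r \<subseteq> S \<and> (\<forall>x\<in>cball p r. \<forall>y\<in>cball p r. norm (b (F x) (G x) - b (F y) (G y)) \<le> L * norm (x - y))"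
    using r 1 by blast
qed

lemma locLip_add:
  assumes F: "locLip S F" and G: "locLip S G"
  shows "locLip S (\<lambda>x. F x + G x)"
  unfolding locLip_def
proof
  fix p assume p: "p \<in> S"
  obtain r1 L1 where 1: "r1 > 0" "L1 > 0" "cball p r1 \<subseteq> S"
    "\<forall>x\<in>cball p r1. \<forall>y\<in>cball p r1. norm (F x - F y) \<le> L1 * norm (x - y)"
    using F p unfolding locLip_def by blast
  obtain r2 L2 where 2: "r2 > 0" "L2 > 0" "cball p r2 \<subseteq> S"
    "\<forall>x\<in>cball p r2. \<forall>y\<in>cball p r2. norm (G x - G y) \<le> L2 * norm (x - y)"
    using G p unfolding locLip_def by blast
  define r where "r = min r1 r2"
  have r: "r > 0" "cball p r \<subseteq> cball p r1" "cball p r \<subseteq> cball p r2" using 1 2 by (auto simp: r_def)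
  have h: "\<forall>x\<in>cball p r. \<forall>y\<in>cball p r. norm ((F x + G x) - (F y + G y)) \<le> (L1 + L2) * norm (x - y)"
  proof (intro ballI)
    fix x y assume x: "x \<in> cball p r" and y: "y \<in> cball p r"
    have e: "(F x + G x) - (F y + G y) = (F x - F y) + (G x - G y)" by simp
    have "norm ((F x + G x) - (F y + G y)) \<le> norm (F x - F y) + norm (G x - G y)"
      unfolding e by (rule norm_triangle_ineq)
    also have "\<dots> \<le> L1 * norm (x - y) + L2 * norm (x - y)"
    proof (rule add_mono)
      show "norm (F x - F y) \<le> L1 * norm (x - y)" using 1(4) r(2) x y by blast
      show "norm (G x - G y) \<le> L2 * norm (x - y)" using 2(4) r(3) x y by blast
    qed
    finally show "norm ((F x + G x) - (F y + G y)) \<le> (L1 + L2) * norm (x - y)" by (simp add: algebra_simps)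
  qed
  show "\<exists>r>0. \<exists>L>0. cball p r \<subseteq> S \<and> (\<forall>x\<in>cball p r. \<forall>y\<in>cball p r. norm ((F x + G x) - (F y + G y)) \<le> L * norm (x - y))"
  proof -
    have "cball p r \<subseteq> S" using r 1 by blast
    moreover have "L1 + L2 > 0" using 1 2 by simp
    ultimately show ?thesis using r(1) h by blast
  qed
qed

lemma locLip_const: assumes "open S" shows "locLip S (\<lambda>x. c)"
  unfolding locLip_def
proof
  fix p assume "p \<in> S"
  obtain r where "r > 0" "cball p r \<subseteq> S" using assms \<open>p \<in> S\<close> open_contains_cball by blast
  show "\<exists>r>0. \<exists>L>0. cball p r \<subseteq> S \<and> (\<forall>x\<in>cball p r. \<forall>y\<in>cball p r. norm (c - c) \<le> L * norm (x - y))"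
  proof -
    have "\<forall>x\<in>cball p r. \<forall>y\<in>cball p r. norm (c - c) \<le> 1 * norm (x - y)" by simp
    then show ?thesis using zero_less_one \<open>r > 0\<close> \<open>cball p r \<subseteq> S\<close> by blast
  qed
qed

lemma locLip_slice:
  fixes F :: "('a::real_normed_vector \<times> 'c::real_normed_vector) \<Rightarrow> 'b::real_normed_vector"
  assumes F: "locLip (S \<times> UNIV) F"
  shows "locLip S (\<lambda>x. F (x, c))"
  unfolding locLip_def
proof
  fix p assume p: "p \<in> S"
  obtain r L where 1: "r > 0" "L > 0" "cball (p, c) r \<subseteq> S \<times> UNIV"
    "\<forall>x\<in>cball (p, c) r. \<forall>y\<in>cball (p, c) r. norm (F x - F y) \<le> L * norm (x - y)"
    using F[unfolded locLip_def, rule_format, of "(p, c)"] p by blast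
  have m: "x \<in> cball p r \<Longrightarrow> (x, c) \<in> cball (p, c) r" for x
    by (simp add: dist_Pair_Pair)
  have "cball p r \<subseteq> S" using 1(3) m by blast
  moreover have "\<forall>x\<in>cball p r. \<forall>y\<in>cball p r. norm (F (x, c) - F (y, c)) \<le> L * norm (x - y)"
  proof (intro ballI)
    fix x y assume "x \<in> cball p r" "y \<in> cball p r"
    then have "norm (F (x, c) - F (y, c)) \<le> L * norm ((x, c) - (y, c))" using 1(4) m by blast
    moreover have "norm ((x, c) - (y, c)) = norm (x - y)" by (simp add: norm_Pair)
    ultimately show "norm (F (x, c) - F (y, c)) \<le> L * norm (x - y)" by simp
  qed
  ultimately show "\<exists>r>0. \<exists>L>0. cball p r \<subseteq> S \<and> (\<forall>x\<in>cball p r. \<forall>y\<in>cball p r. norm (F (x, c) - F (y, c)) \<le> L * norm (x - y))"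
    using 1 by blast
qed


lemma lip_cont:
  assumes "\<forall>x\<in>K. \<forall>y\<in>K. norm (F x - F y) \<le> L * norm (x - y)" "L > 0"
  shows "continuous_on K F"
  unfolding continuous_on_iff
proof (intro ballI allI impI)
  fix x e assume x: "x \<in> K" and e: "(0::real) < e"
  show "\<exists>d>0. \<forall>x'\<in>K. dist x' x < d \<longrightarrow> dist (F x') (F x) < e"
  proof (intro exI[of _ "e / L"] conjI ballI impI)
    show "e / L > 0" using e assms by simp
    fix x' assume x': "x' \<in> K" and d: "dist x' x < e / L"
    have "dist (F x') (F x) \<le> L * dist x' x" using assms x x' by (simp add: dist_norm)
    also have "\<dots> < L * (e / L)" using d assms by (intro mult_strict_left_mono) auto
    finally show "dist (F x') (F x) < e" using assms by simp
  qed
qed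

lemma picard:
  fixes F :: "'a::euclidean_space \<Rightarrow> 'a"
  assumes r: "r > 0" and L: "L > 0"
    and lip: "\<forall>x\<in>cball q r. \<forall>y\<in>cball q r. norm (F x - F y) \<le> L * norm (x - y)"
  shows "\<exists>\<delta>>0. \<exists>y. y 0 = q \<and> (\<forall>t\<in>{0..\<delta>}. y t \<in> cball q r \<and> (y has_vector_derivative F (y t)) (at t within {0..\<delta>}))"
proof -
  define M where "M = norm (F q) + L * r + 1"
  have M: "M > 0" unfolding M_def using r L by (simp add: add_nonneg_pos)
  have FM: "norm (F x) \<le> M" if "x \<in> cball q r" for x
  proof -
    have "norm (F x - F q) \<le> L * norm (x - q)" using lip that r by simp
    also have "\<dots> \<le> L * r" using that L by (intro mult_left_mono) (auto simp: dist_norm norm_minus_commute)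
    finally show ?thesis unfolding M_def by (smt (verit) norm_triangle_ineq2)
  qed
  have Fc: "continuous_on (cball q r) F" using lip_cont[OF lip L] .
  define \<delta> where "\<delta> = min (r / M) (1 / (2 * L))"
  have \<delta>: "\<delta> > 0" "M * \<delta> \<le> r" "L * \<delta> \<le> 1/2"
    using M r L unfolding \<delta>_def by (auto simp: min_def field_simps)
  define c where "c t = max 0 (min \<delta> t)" for t :: real
  have c_in: "c t \<in> {0..\<delta>}" for t using \<delta> by (auto simp: c_def)
  have c_cont: "continuous_on UNIV c" unfolding c_def by (intro continuous_intros)
  have c_id: "t \<in> {0..\<delta>} \<Longrightarrow> c t = t" for t by (auto simp: c_def)
  define S :: "(real \<Rightarrow>\<^sub>C 'a) set" where "S = PiC UNIV (\<lambda>_. cball q r)"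
  have S_mem: "\<phi> \<in> S \<longleftrightarrow> (\<forall>t. apply_bcontfun \<phi> t \<in> cball q r)" for \<phi>
    unfolding S_def by (simp add: mem_PiC_iff Pi_iff)
  have S_complete: "complete S" unfolding S_def complete_eq_closed by (rule closed_PiC) simp
  have S_ne: "S \<noteq> {}"
  proof -
    have "const_bcontfun q \<in> S" unfolding S_mem by (simp add: const_bcontfun.rep_eq r less_imp_le)
    then show ?thesis by blast
  qed
  define Pf where "Pf \<phi> t = q + integral {0..c t} (\<lambda>s. F (apply_bcontfun \<phi> s))" for \<phi> t
  have Gc: "continuous_on A (\<lambda>s. F (apply_bcontfun \<phi> s))" if "\<phi> \<in> S" for \<phi> A
    by (rule continuous_on_compose2[OF Fc continuous_on_apply_bcontfun]) (use that S_mem in auto)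
  have Ibound: "norm (integral {0..c t} (\<lambda>s. F (apply_bcontfun \<phi> s))) \<le> M * \<delta>" if "\<phi> \<in> S" for \<phi> t
  proof -
    have "norm (integral {0..c t} (\<lambda>s. F (apply_bcontfun \<phi> s))) \<le> M * (c t - 0)"
      by (rule integral_bound) (use c_in Gc[OF that] FM that S_mem in auto)
    also have "\<dots> \<le> M * \<delta>" using c_in[of t] M by (intro mult_left_mono) auto
    finally show ?thesis .
  qed
  have Pf_bc: "Pf \<phi> \<in> bcontfun" if "\<phi> \<in> S" for \<phi>
  proof (rule bcontfun_normI)
    have "continuous_on {0..\<delta>} (\<lambda>u. integral {0..u} (\<lambda>s. F (apply_bcontfun \<phi> s)))"
      by (rule indefinite_integral_continuous_1, rule integrable_continuous_real, rule Gc[OF that])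
    then have "continuous_on UNIV (\<lambda>t. integral {0..c t} (\<lambda>s. F (apply_bcontfun \<phi> s)))"
      by (rule continuous_on_compose2[OF _ c_cont]) (use c_in in auto)
    then show "continuous_on UNIV (Pf \<phi>)" unfolding Pf_def by (intro continuous_intros)
    fix t
    show "norm (Pf \<phi> t) \<le> norm q + M * \<delta>"
      unfolding Pf_def using Ibound[OF that, of t] norm_triangle_ineq[of q] by (smt (verit))
  qed
  define P where "P \<phi> = Bcontfun (Pf \<phi>)" for \<phi>
  have P_ap: "apply_bcontfun (P \<phi>) = Pf \<phi>" if "\<phi> \<in> S" for \<phi>
    unfolding P_def using Pf_bc[OF that] by (simp add: Bcontfun_inverse)
  have PS: "P ` S \<subseteq> S"
  proof
    fix \<psi> assume "\<psi> \<in> P ` S"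
    then obtain \<phi> where \<phi>: "\<phi> \<in> S" "\<psi> = P \<phi>" by blast
    show "\<psi> \<in> S" unfolding S_mem \<phi>(2) P_ap[OF \<phi>(1)]
    proof
      fix t
      have "dist q (Pf \<phi> t) = norm (integral {0..c t} (\<lambda>s. F (apply_bcontfun \<phi> s)))"
        unfolding Pf_def by (simp add: dist_norm)
      also have "\<dots> \<le> r" using Ibound[OF \<phi>(1), of t] \<delta> by simp
      finally show "Pf \<phi> t \<in> cball q r" by simp
    qed
  qed
  have contr: "dist (P \<phi>) (P \<psi>) \<le> (1/2) * dist \<phi> \<psi>" if "\<phi> \<in> S" "\<psi> \<in> S" for \<phi> \<psi>
  proof (rule dist_bound)
    fix t
    have "dist (P \<phi> t) (P \<psi> t) = norm (integral {0..c t} (\<lambda>s. F (apply_bcontfun \<phi> s)) - integral {0..c t} (\<lambda>s. F (apply_bcontfun \<psi> s)))"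
      unfolding P_ap[OF that(1)] P_ap[OF that(2)] Pf_def by (simp add: dist_norm)
    also have "\<dots> = norm (integral {0..c t} (\<lambda>s. F (apply_bcontfun \<phi> s) - F (apply_bcontfun \<psi> s)))"
      by (subst integral_diff) (auto intro!: integrable_continuous_real Gc that)
    also have "\<dots> \<le> (L * dist \<phi> \<psi>) * (c t - 0)"
    proof (rule integral_bound)
      show "0 \<le> c t" using c_in by auto
      show "continuous_on {0..c t} (\<lambda>s. F (apply_bcontfun \<phi> s) - F (apply_bcontfun \<psi> s))"
        by (intro continuous_intros Gc that)
      fix s
      have "norm (F (apply_bcontfun \<phi> s) - F (apply_bcontfun \<psi> s)) \<le> L * norm (apply_bcontfun \<phi> s - apply_bcontfun \<psi> s)"
        using lip that S_mem by blast
      also have "\<dots> \<le> L * dist \<phi> \<psi>" using L dist_bounded[of \<phi> s \<psi>] by (simp add: dist_norm)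
      finally show "norm (F (apply_bcontfun \<phi> s) - F (apply_bcontfun \<psi> s)) \<le> L * dist \<phi> \<psi>" .
    qed
    also have "\<dots> \<le> (L * dist \<phi> \<psi>) * \<delta>" using c_in[of t] L by (intro mult_left_mono) auto
    also have "\<dots> = (L * \<delta>) * dist \<phi> \<psi>" by simp
    also have "\<dots> \<le> (1/2) * dist \<phi> \<psi>" using \<delta> by (intro mult_right_mono) auto
    finally show "dist (P \<phi> t) (P \<psi> t) \<le> (1/2) * dist \<phi> \<psi>" .
  qed
  obtain \<phi> where \<phi>: "\<phi> \<in> S" "P \<phi> = \<phi>"
    using Banach_fix[OF S_complete S_ne _ _ PS contr] by auto
  define y where "y = apply_bcontfun \<phi>"
  have yeq: "y t = Pf \<phi> t" for t unfolding y_def using P_ap[OF \<phi>(1)] \<phi>(2) by metis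
  have yint: "y u = q + integral {0..u} (\<lambda>s. F (y s))" if "u \<in> {0..\<delta>}" for u
    using yeq[of u] c_id[OF that] unfolding Pf_def y_def by simp
  have "y 0 = q" unfolding yeq Pf_def c_def by simp
  moreover have "\<forall>t\<in>{0..\<delta>}. y t \<in> cball q r \<and> (y has_vector_derivative F (y t)) (at t within {0..\<delta>})"
  proof
    fix t assume t: "t \<in> {0..\<delta>}"
    have "y t \<in> cball q r" using \<phi>(1) S_mem y_def by blast
    moreover have "((\<lambda>u. q + integral {0..u} (\<lambda>s. F (y s))) has_vector_derivative F (y t)) (at t within {0..\<delta>})"
      using integral_has_vector_derivative[OF Gc[OF \<phi>(1)] t] unfolding y_def
      by (intro derivative_eq_intros) auto
    then have "(y has_vector_derivative F (y t)) (at t within {0..\<delta>})"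
      by (rule has_vector_derivative_transform[OF t, rotated]) (rule yint)
    ultimately show "y t \<in> cball q r \<and> (y has_vector_derivative F (y t)) (at t within {0..\<delta>})" by blast
  qed
  ultimately show ?thesis using \<delta>(1) by blast
qed


lemma vec_bound:
  fixes f :: "real \<Rightarrow> 'a::real_normed_vector"
  assumes ab: "a \<le> b"
    and d: "\<forall>t\<in>{a..b}. (f has_vector_derivative f' t) (at t within {a..b})"
    and B: "\<forall>t\<in>{a..b}. norm (f' t) \<le> B"
  shows "norm (f b - f a) \<le> B * (b - a)"
proof -
  have "norm (f b - f a) \<le> B * norm (b - a)"
  proof (rule differentiable_bound[of "{a..b}" f "\<lambda>t h. h *\<^sub>R f' t"])
    show "convex {a..b}" by simp
    fix t assume t: "t \<in> {a..b}"
    show "(f has_derivative (\<lambda>h. h *\<^sub>R f' t)) (at t within {a..b})"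
      using d t unfolding has_vector_derivative_def by blast
    have "onorm (\<lambda>h::real. h *\<^sub>R f' t) = onorm (\<lambda>h::real. h) * norm (f' t)"
      by (rule onorm_scaleR_left) (rule bounded_linear_ident)
    then show "onorm (\<lambda>h::real. h *\<^sub>R f' t) \<le> B" using B t by (simp add: onorm_id)
  qed (use ab in auto)
  then show ?thesis using ab by simp
qed

lemma local_unique:
  fixes x y :: "real \<Rightarrow> 'a::real_normed_vector"
  assumes ab: "a \<le> b" and L: "L > 0" "L * (b - a) < 1"
    and lip: "\<forall>u\<in>K. \<forall>v\<in>K. norm (F u - F v) \<le> L * norm (u - v)"
    and xK: "\<forall>t\<in>{a..b}. x t \<in> K" and yK: "\<forall>t\<in>{a..b}. y t \<in> K"
    and dx: "\<forall>t\<in>{a..b}. (x has_vector_derivative F (x t)) (at t within {a..b})"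
    and dy: "\<forall>t\<in>{a..b}. (y has_vector_derivative F (y t)) (at t within {a..b})"
    and x0: "x a = y a"
  shows "\<forall>t\<in>{a..b}. x t = y t"
proof -
  define e where "e t = x t - y t" for t
  have de: "\<forall>t\<in>{a..b}. (e has_vector_derivative (F (x t) - F (y t))) (at t within {a..b})"
    unfolding e_def using dx dy by (auto intro: has_vector_derivative_diff)
  have ce: "continuous_on {a..b} (\<lambda>t. norm (e t))"
    by (intro continuous_on_norm continuous_on_vector_derivative) (use de in blast)
  obtain tm where tm: "tm \<in> {a..b}" "\<forall>t\<in>{a..b}. norm (e t) \<le> norm (e tm)"
    using continuous_attains_sup[OF compact_Icc _ ce] ab by auto
  define M where "M = norm (e tm)"
  have bnd: "norm (e t) \<le> L * M * (b - a)" if t: "t \<in> {a..b}" for t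
  proof -
    have sub: "{a..t} \<subseteq> {a..b}" using t by auto
    have "norm (e t - e a) \<le> (L * M) * (t - a)"
    proof (rule vec_bound)
      show "a \<le> t" using t by simp
      show "\<forall>u\<in>{a..t}. (e has_vector_derivative (F (x u) - F (y u))) (at u within {a..t})"
        using de sub by (meson has_vector_derivative_within_subset subsetD)
      show "\<forall>u\<in>{a..t}. norm (F (x u) - F (y u)) \<le> L * M"
      proof
        fix u assume "u \<in> {a..t}"
        then have u: "u \<in> {a..b}" using sub by blast
        have "norm (F (x u) - F (y u)) \<le> L * norm (x u - y u)" using lip xK yK u by blast
        also have "\<dots> \<le> L * M" using tm(2) u L unfolding M_def e_def by (intro mult_left_mono) auto
        finally show "norm (F (x u) - F (y u)) \<le> L * M" .
      qed
    qed
    also have "\<dots> \<le> (L * M) * (b - a)" using t L by (intro mult_left_mono) (auto simp: M_def)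
    finally show ?thesis using x0 by (simp add: e_def)
  qed
  have "M \<le> L * M * (b - a)" using bnd[OF tm(1)] unfolding M_def .
  then have "M * (1 - L * (b - a)) \<le> 0" by (simp add: algebra_simps)
  then have "M \<le> 0" using L(2) by (simp add: mult_le_0_iff)
  then show ?thesis using tm(2) unfolding M_def e_def by auto
qed


lemma invariance_core:
  fixes x :: "real \<Rightarrow> 'a::euclidean_space" and hb :: "'a \<Rightarrow> real"
  assumes Xo: "open X" and T: "0 \<le> T"
    and LFs: "locLip X Fs" and LFb: "locLip X Fb"
    and hbc: "continuous_on X hb"
    and eq: "\<forall>z\<in>X. hb z \<ge> 0 \<longrightarrow> Fs z = Fb z"
    and inv: "forward_invariant X Fb {z\<in>X. hb z \<ge> 0}"
    and xX: "\<forall>t\<in>{0..T}. x t \<in> X"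
    and dx: "\<forall>t\<in>{0..T}. (x has_vector_derivative Fs (x t)) (at t within {0..T})"
    and x0: "hb (x 0) \<ge> 0"
  shows "\<forall>t\<in>{0..T}. hb (x t) \<ge> 0"
proof (rule ccontr)
  assume "\<not> ?thesis"
  then obtain t1 where t1: "t1 \<in> {0..T}" "hb (x t1) < 0" by (auto simp: not_le)
  define Z where "Z = {t\<in>{0..T}. hb (x t) < 0}"
  define s where "s = Inf Z"
  have Zne: "Z \<noteq> {}" unfolding Z_def using t1 by blast
  have Zbdd: "bdd_below Z" unfolding Z_def by (rule bdd_belowI[of _ 0]) auto
  have s_le: "s \<le> z" if "z \<in> Z" for z unfolding s_def using cInf_lower[OF that Zbdd] .
  have s0: "0 \<le> s" unfolding s_def by (rule cInf_greatest[OF Zne]) (auto simp: Z_def)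
  have "t1 \<in> Z" unfolding Z_def using t1 by simp
  then have sT: "s \<le> T" using s_le[of t1] t1 by simp
  have before: "hb (x t) \<ge> 0" if "t \<in> {0..T}" "t < s" for t
  proof (rule ccontr)
    assume "\<not> hb (x t) \<ge> 0"
    then have "t \<in> Z" using that(1) unfolding Z_def by simp
    then show False using s_le[of t] that(2) by simp
  qed
  have xc: "continuous_on {0..T} x" by (rule continuous_on_vector_derivative[of _ _ "\<lambda>t. Fs (x t)"]) (use dx in blast)
  have hxc: "continuous_on {0..T} (\<lambda>t. hb (x t))"
    by (rule continuous_on_compose2[OF hbc xc]) (use xX in blast)
  have hs: "hb (x s) \<ge> 0"
  proof (rule ccontr)
    assume neg: "\<not> hb (x s) \<ge> 0"
    show False
    proof (cases "s = 0")
      case True then show False using neg x0 by simp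
    next
      case False
      then have sp: "s > 0" using s0 by simp
      have sI: "s \<in> {0..T}" using s0 sT by simp
      have "- hb (x s) > 0" using neg by simp
      then obtain d where d: "d > 0" "\<forall>t\<in>{0..T}. dist t s < d \<longrightarrow> dist (hb (x t)) (hb (x s)) < - hb (x s)"
        using hxc[unfolded continuous_on_iff, rule_format, OF sI] by blast
      define t where "t = max 0 (s - d/2)"
      have t: "t \<in> {0..T}" "t < s" "dist t s < d" using sp d sT unfolding t_def by (auto simp: dist_real_def)
      then have "dist (hb (x t)) (hb (x s)) < - hb (x s)" using d by blast
      then have "hb (x t) < 0" by (auto simp: dist_real_def)
      then show False using before[OF t(1,2)] by simp
    qed
  qed
  have sZ: "s \<notin> Z" using hs Z_def by auto
  have sT': "s < T"
  proof (rule ccontr)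
    assume "\<not> s < T"
    then have "s = T" using sT by simp
    then have "t1 = s" using s_le[of t1] t1 Z_def by auto
    then show False using sZ t1 Z_def by auto
  qed
  define q where "q = x s"
  have qX: "q \<in> X" using xX s0 sT unfolding q_def by auto
  obtain r L where rL: "r > 0" "L > 0" "cball q r \<subseteq> X"
    "\<forall>u\<in>cball q r. \<forall>v\<in>cball q r. norm (Fb u - Fb v) \<le> L * norm (u - v)"
    using LFb qX unfolding locLip_def by blast
  obtain \<delta> y where y: "\<delta> > 0" "y 0 = q"
    "\<forall>t\<in>{0..\<delta>}. y t \<in> cball q r \<and> (y has_vector_derivative Fb (y t)) (at t within {0..\<delta>})"
    using picard[OF rL(1,2,4)] by blast
  have yC: "\<forall>t\<in>{0..\<delta>}. y t \<in> {z\<in>X. hb z \<ge> 0}"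
  proof -
    have "y 0 \<in> {z\<in>X. hb z \<ge> 0}" using y(2) qX hs q_def by simp
    moreover have "\<forall>t\<in>{0..\<delta>}. y t \<in> X \<and> (y has_vector_derivative Fb (y t)) (at t within {0..\<delta>})"
      using y(3) rL(3) by blast
    moreover have "0 \<le> \<delta>" using y(1) by simp
    moreover have "0 \<le> \<delta> \<and> y 0 \<in> {z\<in>X. hb z \<ge> 0} \<and> (\<forall>t\<in>{0..\<delta>}. y t \<in> X \<and> (y has_vector_derivative Fb (y t)) (at t within {0..\<delta>}))
        \<longrightarrow> (\<forall>t\<in>{0..\<delta>}. y t \<in> {z\<in>X. hb z \<ge> 0})"
      using inv unfolding forward_invariant_def by (rule spec[of _ \<delta>, OF spec[of _ y]])
    ultimately show ?thesis by blast
  qed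
  have dyS: "\<forall>t\<in>{0..\<delta>}. (y has_vector_derivative Fs (y t)) (at t within {0..\<delta>})"
  proof
    fix t assume t: "t \<in> {0..\<delta>}"
    have "y t \<in> X" "hb (y t) \<ge> 0" using yC t by auto
    then have "Fs (y t) = Fb (y t)" using eq by blast
    then show "(y has_vector_derivative Fs (y t)) (at t within {0..\<delta>})" using y(3) t by simp
  qed
  define w where "w t = y (t - s)" for t
  have dw: "(w has_vector_derivative Fs (w t)) (at t within {s..s+\<delta>})" if t: "t \<in> {s..s+\<delta>}" for t
  proof -
    have "((\<lambda>t. t - s) has_vector_derivative 1) (at t within {s..s+\<delta>})"
      by (auto intro!: derivative_eq_intros)
    moreover have "(y has_vector_derivative Fs (y (t - s))) (at (t - s) within (\<lambda>t. t - s) ` {s..s+\<delta>})"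
      by (rule has_vector_derivative_within_subset[of _ _ _ "{0..\<delta>}"]) (use dyS t in auto)
    ultimately have "((y \<circ> (\<lambda>t. t - s)) has_vector_derivative 1 *\<^sub>R Fs (y (t - s))) (at t within {s..s+\<delta>})"
      by (rule vector_diff_chain_within)
    then show ?thesis unfolding w_def o_def by simp
  qed
  have wC: "\<forall>t\<in>{s..s+\<delta>}. hb (w t) \<ge> 0" using yC unfolding w_def by auto
  have wc: "continuous_on {s..s+\<delta>} w" by (rule continuous_on_vector_derivative[of _ _ "\<lambda>t. Fs (w t)"]) (use dw in blast)
  obtain r2 L2 where rL2: "r2 > 0" "L2 > 0" "cball q r2 \<subseteq> X"
    "\<forall>u\<in>cball q r2. \<forall>v\<in>cball q r2. norm (Fs u - Fs v) \<le> L2 * norm (u - v)"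
    using LFs qX unfolding locLip_def by blast
  have sI: "s \<in> {0..T}" using s0 sT by simp
  obtain d1 where d1: "d1 > 0" "\<forall>t\<in>{0..T}. dist t s < d1 \<longrightarrow> dist (x t) (x s) < r2"
    using xc[unfolded continuous_on_iff, rule_format, OF sI rL2(1)] by blast
  have sI2: "s \<in> {s..s+\<delta>}" using y(1) by simp
  obtain d2 where d2: "d2 > 0" "\<forall>t\<in>{s..s+\<delta>}. dist t s < d2 \<longrightarrow> dist (w t) (w s) < r2"
    using wc[unfolded continuous_on_iff, rule_format, OF sI2 rL2(1)] by blast
  define h where "h = min (min \<delta> (T - s)) (min (1 / (2 * L2)) (min (d1/2) (d2/2)))"
  have h1: "h \<le> \<delta>" "h \<le> T - s" "h \<le> 1/(2*L2)" "h \<le> d1/2" "h \<le> d2/2" unfolding h_def by (simp_all only: min_le_iff_disj) auto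
  have h0: "h > 0" unfolding h_def using y(1) sT' rL2(2) d1(1) d2(1) by simp
  have "L2 * h \<le> L2 * (1/(2*L2))" using h1(3) rL2(2) by (intro mult_left_mono) auto
  also have "\<dots> = 1/2" using rL2(2) by simp
  finally have hL: "L2 * h < 1" by simp
  have h: "h > 0" "h \<le> \<delta>" "s + h \<le> T" "L2 * h < 1" "h < d1" "h < d2"
    using h0 h1 hL d1(1) d2(1) by auto
  have ws: "w s = q" unfolding w_def q_def using y(2) q_def by simp
  have eqxw: "\<forall>t\<in>{s..s+h}. x t = w t"
  proof (rule local_unique[where F = Fs and K = "cball q r2" and L = L2])
    show "s \<le> s + h" using h by simp
    show "L2 > 0" using rL2 by simp
    show "L2 * (s + h - s) < 1" using h by simp
    show "\<forall>u\<in>cball q r2. \<forall>v\<in>cball q r2. norm (Fs u - Fs v) \<le> L2 * norm (u - v)" using rL2(4) .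
    show "\<forall>t\<in>{s..s+h}. x t \<in> cball q r2"
    proof
      fix t assume t: "t \<in> {s..s+h}"
      then have "t \<in> {0..T}" "dist t s < d1" using s0 h by (auto simp: dist_real_def)
      then show "x t \<in> cball q r2" using d1 unfolding q_def by (auto simp: dist_commute)
    qed
    show "\<forall>t\<in>{s..s+h}. w t \<in> cball q r2"
    proof
      fix t assume t: "t \<in> {s..s+h}"
      then have "t \<in> {s..s+\<delta>}" "dist t s < d2" using h by (auto simp: dist_real_def)
      then show "w t \<in> cball q r2" using d2 ws by (auto simp: dist_commute)
    qed
    show "\<forall>t\<in>{s..s+h}. (x has_vector_derivative Fs (x t)) (at t within {s..s+h})"
    proof
      fix t assume t: "t \<in> {s..s+h}"
      have sub: "{s..s+h} \<subseteq> {0..T}" using s0 h by auto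
      show "(x has_vector_derivative Fs (x t)) (at t within {s..s+h})"
        using has_vector_derivative_within_subset[OF _ sub] dx sub t by blast
    qed
    show "\<forall>t\<in>{s..s+h}. (w has_vector_derivative Fs (w t)) (at t within {s..s+h})"
    proof
      fix t assume t: "t \<in> {s..s+h}"
      have sub: "{s..s+h} \<subseteq> {s..s+\<delta>}" using h by auto
      show "(w has_vector_derivative Fs (w t)) (at t within {s..s+h})"
        using has_vector_derivative_within_subset[OF dw sub] sub t by blast
    qed
    show "x s = w s" using ws q_def by simp
  qed
  obtain z where z: "z \<in> Z" "z < s + h"
    using cInf_less_iff[OF Zne Zbdd, of "s + h"] h(1) unfolding s_def by auto
  have "z \<in> {s..s+h}" using z s_le by auto
  then have "x z = w z" "z \<in> {s..s+\<delta>}" using eqxw h by auto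
  then have "hb (x z) \<ge> 0" using wC by simp
  then show False using z Z_def by auto
qed


lemma locLip_diff:
  assumes F: "locLip S F" and G: "locLip S G"
  shows "locLip S (\<lambda>x. F x - G x)"
  unfolding locLip_def
proof
  fix p assume p: "p \<in> S"
  obtain r1 L1 where 1: "r1 > 0" "L1 > 0" "cball p r1 \<subseteq> S"
    "\<forall>x\<in>cball p r1. \<forall>y\<in>cball p r1. norm (F x - F y) \<le> L1 * norm (x - y)"
    using F p unfolding locLip_def by blast
  obtain r2 L2 where 2: "r2 > 0" "L2 > 0" "cball p r2 \<subseteq> S"
    "\<forall>x\<in>cball p r2. \<forall>y\<in>cball p r2. norm (G x - G y) \<le> L2 * norm (x - y)"
    using G p unfolding locLip_def by blast
  define r where "r = min r1 r2"
  have r: "r > 0" "cball p r \<subseteq> cball p r1" "cball p r \<subseteq> cball p r2" using 1 2 by (auto simp: r_def)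
  have h: "\<forall>x\<in>cball p r. \<forall>y\<in>cball p r. norm ((F x - G x) - (F y - G y)) \<le> (L1 + L2) * norm (x - y)"
  proof (intro ballI)
    fix x y assume x: "x \<in> cball p r" and y: "y \<in> cball p r"
    have e: "(F x - G x) - (F y - G y) = (F x - F y) - (G x - G y)" by simp
    have "norm ((F x - G x) - (F y - G y)) \<le> norm (F x - F y) + norm (G x - G y)"
      unfolding e by (rule norm_triangle_ineq4)
    also have "\<dots> \<le> L1 * norm (x - y) + L2 * norm (x - y)"
    proof (rule add_mono)
      show "norm (F x - F y) \<le> L1 * norm (x - y)" using 1(4) r(2) x y by blast
      show "norm (G x - G y) \<le> L2 * norm (x - y)" using 2(4) r(3) x y by blast
    qed
    finally show "norm ((F x - G x) - (F y - G y)) \<le> (L1 + L2) * norm (x - y)" by (simp add: algebra_simps)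
  qed
  show "\<exists>r>0. \<exists>L>0. cball p r \<subseteq> S \<and> (\<forall>x\<in>cball p r. \<forall>y\<in>cball p r. norm ((F x - G x) - (F y - G y)) \<le> L * norm (x - y))"
  proof -
    have "cball p r \<subseteq> S" using r 1 by blast
    moreover have "L1 + L2 > 0" using 1 2 by simp
    ultimately show ?thesis using r(1) h by blast
  qed
qed

lemma bilinear_mv: "bilinear (\<lambda>(A::real^'m^'n) (v::real^'m). A *v v)"
  unfolding bilinear_def
  by (auto intro!: linearI simp: algebra_simps scaleR_matrix_vector_assoc)

lemma bb_mv: "bounded_bilinear (\<lambda>(A::real^'m^'n) (v::real^'m). A *v v)"
  using bilinear_mv bilinear_conv_bounded_bilinear by blast

lemma hvd_fst: "(\<phi> has_vector_derivative v) F \<Longrightarrow> ((\<lambda>t. fst (\<phi> t)) has_vector_derivative fst v) F"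
  unfolding has_vector_derivative_def by (drule has_derivative_fst) simp

lemma hvd_snd: "(\<phi> has_vector_derivative v) F \<Longrightarrow> ((\<lambda>t. snd (\<phi> t)) has_vector_derivative snd v) F"
  unfolding has_vector_derivative_def by (drule has_derivative_snd) simp

lemma C1_cont: assumes "C1_on S F" shows "continuous_on S F"
proof -
  obtain F' where d: "\<forall>x\<in>S. (F has_derivative blinfun_apply (F' x)) (at x)"
    using assms unfolding C1_on_def by blast
  show ?thesis
    by (rule continuous_at_imp_continuous_on) (use d has_derivative_continuous in blast)
qed

theorem lemma4:
  fixes X :: "(real^'n) set" and U :: "(real^'m) set"
    and f :: "real^'n \<Rightarrow> real^'n" and g :: "real^'n \<Rightarrow> real^'m^'n"
    and h hb :: "real^'n \<Rightarrow> real" and kb :: "real^'n \<Rightarrow> real^'m"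
    and ke :: "(real^'n) \<times> (real^'p) \<Rightarrow> real^'m" and \<eta> :: "real^'n \<Rightarrow> real"
  assumes X_open: "open X"
    and f_C1: "C1_on X f" and g_C1: "C1_on X g"
    and U_convex: "convex U" and U_polytope: "polytope U"
    and h_C1: "C1_on X h"
    and hb_C1: "C1_on X hb"
    and hb_grad: "\<forall>x \<in> X \<inter> frontier {x\<in>X. hb x \<ge> 0}. \<forall>D. (hb has_derivative D) (at x) \<longrightarrow> D \<noteq> (\<lambda>_. 0)"
    and CB_sub_CS: "{x\<in>X. hb x \<ge> 0} \<subseteq> {x\<in>X. h x \<ge> 0}"
    and kb_C1: "C1_on X kb" and kb_U: "\<forall>x\<in>X. kb x \<in> U"
    and kb_inv: "forward_invariant X (\<lambda>x. f x + g x *v kb x) {x\<in>X. hb x \<ge> 0}"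
    and ke_C1: "C1_on (X \<times> UNIV) ke" and ke_U: "\<forall>x\<in>X. \<forall>\<theta>. ke (x, \<theta>) \<in> U"
    and eta_C1: "C1_on X \<eta>" and eta_range: "\<forall>x\<in>X. 0 \<le> \<eta> x \<and> \<eta> x \<le> 1"
    and eta_one: "\<forall>x\<in>{x\<in>X. hb x \<ge> 0}. \<eta> x = 1"
  defines "fhat \<equiv> (\<lambda>xh :: (real^'n) \<times> (real^'p). (f (fst xh), (0 :: real^'p)))"
    and "ghat \<equiv> (\<lambda>(xh :: (real^'n) \<times> (real^'p)) (uh :: (real^'m) \<times> (real^'p)). (g (fst xh) *v fst uh, snd uh))"
    and "kshat \<equiv> (\<lambda>xh :: (real^'n) \<times> (real^'p).
            ((1 - \<eta> (fst xh)) *\<^sub>R ke xh + \<eta> (fst xh) *\<^sub>R kb (fst xh), (0 :: real^'p)))"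
    and "CBhat \<equiv> {xh \<in> X \<times> (UNIV :: (real^'p) set). hb (fst xh) \<ge> 0}"
  shows "forward_invariant (X \<times> (UNIV :: (real^'p) set)) (\<lambda>xh. fhat xh + ghat xh (kshat xh)) CBhat"
proof -
  note defs = assms(18-21)
  have eqF: "fhat xh + ghat xh (kshat xh) =
      (f (fst xh) + g (fst xh) *v ((1 - \<eta> (fst xh)) *\<^sub>R ke xh + \<eta> (fst xh) *\<^sub>R kb (fst xh)), 0)" for xh
    unfolding defs by (simp add: case_prod_beta)
  have Xo2: "open (X \<times> (UNIV :: (real^'p) set))" by (simp add: open_Times X_open)
  have Lf: "locLip X f" by (rule C1_locLip[OF X_open f_C1])
  have Lg: "locLip X g" by (rule C1_locLip[OF X_open g_C1])
  have Lkb: "locLip X kb" by (rule C1_locLip[OF X_open kb_C1])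
  have Leta: "locLip X \<eta>" by (rule C1_locLip[OF X_open eta_C1])
  have Lke: "locLip (X \<times> UNIV) ke" by (rule C1_locLip[OF Xo2 ke_C1])
  have hbc: "continuous_on X hb" by (rule C1_cont[OF hb_C1])
  define Fb where "Fb z = f z + g z *v kb z" for z
  have LFb: "locLip X Fb" unfolding Fb_def
    by (rule locLip_add[OF Lf locLip_bilinear[OF bb_mv Lg Lkb]])
  show ?thesis unfolding forward_invariant_def
  proof (intro allI impI)
    fix \<phi> :: "real \<Rightarrow> (real^'n) \<times> (real^'p)" and T :: real
    assume A: "0 \<le> T \<and> \<phi> 0 \<in> CBhat \<and> (\<forall>t\<in>{0..T}. \<phi> t \<in> X \<times> UNIV \<and> (\<phi> has_vector_derivative fhat (\<phi> t) + ghat (\<phi> t) (kshat (\<phi> t))) (at t within {0..T}))"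
    then have T: "0 \<le> T" and p0: "\<phi> 0 \<in> CBhat" and pX: "\<forall>t\<in>{0..T}. \<phi> t \<in> X \<times> UNIV"
      and dp: "\<forall>t\<in>{0..T}. (\<phi> has_vector_derivative fhat (\<phi> t) + ghat (\<phi> t) (kshat (\<phi> t))) (at t within {0..T})"
      by auto
    define x where "x t = fst (\<phi> t)" for t
    define \<theta>0 where "\<theta>0 = snd (\<phi> 0)"
    have th: "snd (\<phi> t) = \<theta>0" if t: "t \<in> {0..T}" for t
    proof -
      have "norm (snd (\<phi> t) - snd (\<phi> 0)) \<le> 0 * (t - 0)"
      proof (rule vec_bound[where f' = "\<lambda>_. 0"])
        show "0 \<le> t" using t by simp
        show "\<forall>u\<in>{0..t}. ((\<lambda>t. snd (\<phi> t)) has_vector_derivative 0) (at u within {0..t})"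
        proof
          fix u assume u: "u \<in> {0..t}"
          have sub: "{0..t} \<subseteq> {0..T}" using t by auto
          have "(\<phi> has_vector_derivative fhat (\<phi> u) + ghat (\<phi> u) (kshat (\<phi> u))) (at u within {0..t})"
            using has_vector_derivative_within_subset[OF _ sub] dp u sub by blast
          from hvd_snd[OF this] show "((\<lambda>t. snd (\<phi> t)) has_vector_derivative 0) (at u within {0..t})"
            unfolding eqF by simp
        qed
      qed simp
      then show ?thesis unfolding \<theta>0_def by simp
    qed
    have peq: "\<phi> t = (x t, \<theta>0)" if "t \<in> {0..T}" for t
      using th[OF that] unfolding x_def by (simp add: prod_eq_iff)
    define Fs where "Fs z = f z + g z *v ((1 - \<eta> z) *\<^sub>R ke (z, \<theta>0) + \<eta> z *\<^sub>R kb z)" for z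
    have Lke0: "locLip X (\<lambda>z. ke (z, \<theta>0))" by (rule locLip_slice[OF Lke])
    have L1: "locLip X (\<lambda>z. 1 - \<eta> z)" by (rule locLip_diff[OF locLip_const[OF X_open] Leta])
    have L2: "locLip X (\<lambda>z. (1 - \<eta> z) *\<^sub>R ke (z, \<theta>0))"
      by (rule locLip_bilinear[OF bounded_bilinear_scaleR L1 Lke0])
    have L3: "locLip X (\<lambda>z. \<eta> z *\<^sub>R kb z)"
      by (rule locLip_bilinear[OF bounded_bilinear_scaleR Leta Lkb])
    have LFs: "locLip X Fs" unfolding Fs_def
      by (rule locLip_add[OF Lf locLip_bilinear[OF bb_mv Lg locLip_add[OF L2 L3]]])
    have eq: "\<forall>z\<in>X. hb z \<ge> 0 \<longrightarrow> Fs z = Fb z"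
      using eta_one unfolding Fs_def Fb_def by simp
    have xX: "\<forall>t\<in>{0..T}. x t \<in> X" using pX unfolding x_def by auto
    have dx: "\<forall>t\<in>{0..T}. (x has_vector_derivative Fs (x t)) (at t within {0..T})"
    proof
      fix t assume t: "t \<in> {0..T}"
      have "((\<lambda>t. fst (\<phi> t)) has_vector_derivative fst (fhat (\<phi> t) + ghat (\<phi> t) (kshat (\<phi> t)))) (at t within {0..T})"
        using hvd_fst dp t by blast
      then show "(x has_vector_derivative Fs (x t)) (at t within {0..T})"
        unfolding eqF peq[OF t] by (simp add: x_def[abs_def] Fs_def)
    qed
    have x0: "hb (x 0) \<ge> 0" using p0 unfolding defs x_def by simp
    have hx: "\<forall>t\<in>{0..T}. hb (x t) \<ge> 0"
      by (rule invariance_core[OF X_open T LFs LFb hbc eq _ xX dx x0])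
        (use kb_inv in \<open>simp add: Fb_def[abs_def]\<close>)
    show "\<forall>t\<in>{0..T}. \<phi> t \<in> CBhat"
      using hx pX unfolding defs x_def by auto
  qed
qed

end
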